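(* Let $(\Theta,\mathcal F,\nu)$ be a measure space (with $\Theta$ discrete or continuous), and for each $\vartheta\in\Theta$ let $(V_{n,k}(\vartheta))_{1\le k\le n}$ and $(W_s(\vartheta))_{s\ge1}$ be nonnegative, measurable in $\vartheta$. Suppose that for each $n$, $\Pi_n$ is a finitely exchangeable random partition of $[n]$ whose EPPF is $$p^{(n)}(n_1,\dots,n_k)=\int_\Theta V_{n,k}(\vartheta)\prod_{j=1}^kW_{n_j}(\vartheta)\,\nu(d\vartheta)$$ (a mixture of Gibbs partitions). Then for every $n\ge1$: if $(W_s(\vartheta))_{s\ge1}$ is log-convex for each $\vartheta\in\Theta$, then $p^{(n)}$ is balance-averse; if $(W_s(\vartheta))_{s\ge1}$ is log-concave for each $\vartheta\in\Theta$, then $p^{(n)}$ is balance-seeking.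
   Context: For positive integers $k\le n$, $\mathcal I_n^k$ denotes the set of nonincreasing $k$-tuples $\mathbf n=(n_1,\dots,n_k)$ of positive integers with $\sum_jn_j=n$. For $\mathbf n,\mathbf n'\in\mathcal I_n^k$ write $\mathbf n\prec\mathbf n'$ if $\mathbf n\neq\mathbf n'$ and $\sum_{j=1}^J n_j\ge\sum_{j=1}^J n'_j$ for all $J=1,\dots,k$. The EPPF of a finitely exchangeable (i.e. permutation-invariant in law) random partition $\Pi_n$ of $[n]$ is the symmetric function $p^{(n)}$ with $\mathbb P(\Pi_n=\{S_1,\dots,S_k\})=p^{(n)}(|S_1|,\dots,|S_k|)$. It is balance-averse if for all $k\le n$ and $\mathbf n,\mathbf n'\in\mathcal I^k_n$, $\mathbf n\prec\mathbf n'$ implies $p^{(n)}(\mathbf n)\ge p^{(n)}(\mathbf n')$, and balance-seeking if it implies $p^{(n)}(\mathbf n)\le p^{(n)}(\mathbf n')$. A sequence $(W_s)_{s\ge1}$ is log-convex if $W_s^2\le W_{s-1}W_{s+1}$ for all $s\ge2$, and log-concave if $W_s^2\ge W_{s-1}W_{s+1}$ for all $s\ge2$ and it has no internal zeros (no $a<b<c$ with $W_a>0,W_b=0,W_c>0$). *)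

theory Defs
  imports "HOL-Probability.Probability" "HOL-Library.Disjoint_Sets" "HOL-Library.Multiset"
begin

definition comps :: "nat \<Rightarrow> nat \<Rightarrow> nat list set" where
  "comps n k = {ns. length ns = k \<and> sorted_wrt (\<ge>) ns \<and> (\<forall>x\<in>set ns. 0 < x) \<and> sum_list ns = n}"

definition prec :: "nat list \<Rightarrow> nat list \<Rightarrow> bool" where
  "prec ns ns' \<longleftrightarrow> ns \<noteq> ns' \<and>
     (\<forall>J\<in>{1..length ns}. sum_list (take J ns) \<ge> sum_list (take J ns'))"

definition balance_averse :: "nat \<Rightarrow> (nat list \<Rightarrow> 'b::order) \<Rightarrow> bool" where
  "balance_averse n p \<longleftrightarrow> (\<forall>k. 1 \<le> k \<and> k \<le> n \<longrightarrow>
     (\<forall>ns\<in>comps n k. \<forall>ns'\<in>comps n k. prec ns ns' \<longrightarrow> p ns \<ge> p ns'))"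

definition balance_seeking :: "nat \<Rightarrow> (nat list \<Rightarrow> 'b::order) \<Rightarrow> bool" where
  "balance_seeking n p \<longleftrightarrow> (\<forall>k. 1 \<le> k \<and> k \<le> n \<longrightarrow>
     (\<forall>ns\<in>comps n k. \<forall>ns'\<in>comps n k. prec ns ns' \<longrightarrow> p ns \<le> p ns'))"

text \<open>Sequence (W s) indexed by s \<ge> 1.\<close>
definition log_convex_seq :: "(nat \<Rightarrow> real) \<Rightarrow> bool" where
  "log_convex_seq w \<longleftrightarrow> (\<forall>s\<ge>2. (w s)^2 \<le> w (s - 1) * w (s + 1))"

definition log_concave_seq :: "(nat \<Rightarrow> real) \<Rightarrow> bool" where
  "log_concave_seq w \<longleftrightarrow> (\<forall>s\<ge>2. (w s)^2 \<ge> w (s - 1) * w (s + 1)) \<and>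
     \<not> (\<exists>a b c. 1 \<le> a \<and> a < b \<and> b < c \<and> w a > 0 \<and> w b = 0 \<and> w c > 0)"

text \<open>Block sizes of a set partition, as a list (the EPPF is symmetric, so order is immaterial).\<close>
definition block_sizes :: "'a set set \<Rightarrow> nat list" where
  "block_sizes P = sorted_list_of_multiset (image_mset card (mset_set P))"

definition is_EPPF :: "nat \<Rightarrow> nat set set pmf \<Rightarrow> (nat list \<Rightarrow> ennreal) \<Rightarrow> bool" where
  "is_EPPF n Q p \<longleftrightarrow> set_pmf Q \<subseteq> {P. partition_on {1..n} P} \<and>
     (\<forall>P. partition_on {1..n} P \<longrightarrow> ennreal (pmf Q P) = p (block_sizes P))"

definition gibbs_mix :: "'a measure \<Rightarrow> (nat \<Rightarrow> nat \<Rightarrow> 'a \<Rightarrow> real) \<Rightarrow> (nat \<Rightarrow> 'a \<Rightarrow> real)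
    \<Rightarrow> nat \<Rightarrow> nat list \<Rightarrow> ennreal" where
  "gibbs_mix \<nu> V W n ns =
     (\<integral>\<^sup>+ \<theta>. ennreal (V n (length ns) \<theta> * (\<Prod>s\<leftarrow>ns. W s \<theta>)) \<partial>\<nu>)"

end

theory Submission
  imports Defs
begin


lemma tele:
  fixes d :: "nat \<Rightarrow> real"
  assumes "lo \<le> s"
  shows "(\<Sum>t\<in>{lo<..s}. d t - d (t - 1)) = d s - d lo"
  using assms
proof (induction s rule: dec_induct)
  case base then show ?case by simp
next
  case (step s)
  have "{lo<..Suc s} = insert (Suc s) {lo<..s}" using step by auto
  then show ?case using step by simp
qed

lemma rep:
  fixes f :: "nat \<Rightarrow> real"
  assumes "lo \<le> s" "s \<le> hi"
  shows "f s = f lo + (f (Suc lo) - f lo) * real (s - lo)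
     + (\<Sum>t\<in>{lo<..<hi}. ((f (Suc t) - f t) - (f t - f (t - 1))) * real (s - t))"
  using assms
proof (induction s rule: dec_induct)
  case base
  have "(\<Sum>t\<in>{lo<..<hi}. ((f (Suc t) - f t) - (f t - f (t - 1))) * real (lo - t)) = 0"
    by (rule sum.neutral) auto
  then show ?case by simp
next
  case (step s)
  let ?c = "\<lambda>t. ((f (Suc t) - f t) - (f t - f (t - 1)))"
  have s_hi: "s < hi" using step by simp
  have "(\<Sum>t\<in>{lo<..<hi}. ?c t * real (Suc s - t)) - (\<Sum>t\<in>{lo<..<hi}. ?c t * real (s - t))
       = (\<Sum>t\<in>{lo<..<hi}. ?c t * (if t \<le> s then 1 else 0))"
    unfolding sum_subtractf[symmetric] right_diff_distrib[symmetric]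
    by (intro sum.cong) (auto simp: Suc_diff_le of_nat_diff)
  also have "\<dots> = (\<Sum>t\<in>{lo<..s}. ?c t)"
  proof -
    have "(\<Sum>t\<in>{lo<..<hi}. ?c t * (if t \<le> s then 1 else 0)) = (\<Sum>t\<in>{lo<..<hi} \<inter> {..s}. ?c t)"
      by (simp only: sum.inter_restrict[OF finite_greaterThanLessThan]) (intro sum.cong; auto)
    also have "{lo<..<hi} \<inter> {..s} = {lo<..s}" using s_hi by auto
    finally show ?thesis .
  qed
  also have "\<dots> = (f (Suc s) - f s) - (f (Suc lo) - f lo)"
    using tele[of lo s "\<lambda>t. f (Suc t) - f t"] step by simp
  finally have D: "(\<Sum>t\<in>{lo<..<hi}. ?c t * real (Suc s - t)) = (\<Sum>t\<in>{lo<..<hi}. ?c t * real (s - t))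
      + (f (Suc s) - f s) - (f (Suc lo) - f lo)" by linarith
  have E: "real (Suc s - lo) = real (s - lo) + 1" using step by simp
  show ?case using step D E by (simp add: algebra_simps)
qed

lemma sum_list_sum_swap:
  fixes F :: "'b \<Rightarrow> 'a \<Rightarrow> real"
  shows "sum_list (map (\<lambda>x. \<Sum>t\<in>T. F t x) xs) = (\<Sum>t\<in>T. sum_list (map (F t) xs))"
  by (induction xs) (auto simp: sum.distrib)

lemma split_J:
  assumes "sorted_wrt (\<ge>) (ys::nat list)"
  shows "\<exists>J\<le>length ys. (\<forall>v\<in>set (take J ys). t < v) \<and> (\<forall>v\<in>set (drop J ys). v \<le> t)"
  using assms
proof (induction ys)
  case Nil then show ?case by simp
next
  case (Cons a ys)
  show ?case
  proof (cases "t < a")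
    case True
    then obtain J where "J \<le> length ys" "\<forall>v\<in>set (take J ys). t < v" "\<forall>v\<in>set (drop J ys). v \<le> t"
      using Cons by auto
    then show ?thesis using True by (intro exI[of _ "Suc J"]) auto
  next
    case False
    then show ?thesis using Cons.prems by (intro exI[of _ 0]) auto
  qed
qed

lemma sum_list_split: "sum_list (map g xs) = sum_list (map g (take J xs)) + sum_list (map g (drop J xs))"
  by (metis append_take_drop_id map_append sum_list_append)

lemma sum_list_ge_sub:
  "sum_list (map (\<lambda>v. real v - real t) xs) = real (sum_list xs) - real (length xs) * real t"
  by (induction xs) (auto simp: algebra_simps)

lemma tail:
  assumes "sorted_wrt (\<ge>) (ys::nat list)" "length xs = length ys"
    and pre: "\<And>J. J \<le> length ys \<Longrightarrow> sum_list (take J ys) \<le> sum_list (take J xs)"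
  shows "sum_list (map (\<lambda>v. real (v - t)) ys) \<le> sum_list (map (\<lambda>v. real (v - t)) xs)"
proof -
  obtain J where J: "J \<le> length ys" "\<forall>v\<in>set (take J ys). t < v" "\<forall>v\<in>set (drop J ys). v \<le> t"
    using split_J[OF assms(1)] by blast
  have "sum_list (map (\<lambda>v. real (v - t)) (drop J ys)) = 0"
  proof -
    have "map (\<lambda>v. real (v - t)) (drop J ys) = map (\<lambda>v. 0) (drop J ys)" using J(3) by auto
    then show ?thesis by (metis map_replicate_const sum_list_replicate mult_zero_right)
  qed
  moreover have "map (\<lambda>v. real (v - t)) (take J ys) = map (\<lambda>v. real v - real t) (take J ys)"
    using J(2) by (auto simp: of_nat_diff)
  ultimately have Y: "sum_list (map (\<lambda>v. real (v - t)) ys) = real (sum_list (take J ys)) - real J * real t"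
    using sum_list_split[of "\<lambda>v. real (v - t)" ys J] sum_list_ge_sub[of t "take J ys"] J(1)
    by (simp only:) (simp add: min_def)
  have a1: "sum_list (map (\<lambda>v. real (v - t)) (drop J xs)) \<ge> 0"
    by (intro sum_list_nonneg) auto
  have a2: "sum_list (map (\<lambda>v. real v - real t) (take J xs)) \<le> sum_list (map (\<lambda>v. real (v - t)) (take J xs))"
    by (intro sum_list_mono) auto
  have X: "sum_list (map (\<lambda>v. real (v - t)) xs) \<ge> real (sum_list (take J xs)) - real J * real t"
  proof -
    have "length (take J xs) = J" using J(1) assms(2) by simp
    then have e: "sum_list (map (\<lambda>v. real v - real t) (take J xs)) = real (sum_list (take J xs)) - real J * real t"
      using sum_list_ge_sub[of t "take J xs"] by simp
    then show ?thesis using a1 a2 sum_list_split[of "\<lambda>v. real (v - t)" xs J]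
      by linarith
  qed
  have "real (sum_list (take J ys)) \<le> real (sum_list (take J xs))" using pre[OF J(1)] by simp
  then show ?thesis using X Y by linarith
qed

lemma sum_list_sub_lo:
  assumes "\<forall>v\<in>set xs. lo \<le> v"
  shows "sum_list (map (\<lambda>v. real (v - lo)) xs) = real (sum_list xs) - real (length xs) * real lo"
  using assms by (induction xs) (auto simp: algebra_simps of_nat_diff)

lemma karamata:
  fixes f :: "nat \<Rightarrow> real"
  assumes len: "length xs = length ys" and sumeq: "sum_list xs = sum_list ys"
    and sorted: "sorted_wrt (\<ge>) ys"
    and pre: "\<And>J. J \<le> length ys \<Longrightarrow> sum_list (take J ys) \<le> sum_list (take J xs)"
    and rng: "\<forall>v\<in>set xs \<union> set ys. lo \<le> v \<and> v \<le> hi"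
    and conv: "\<And>t. lo < t \<Longrightarrow> t < hi \<Longrightarrow> f t - f (t - 1) \<le> f (Suc t) - f t"
  shows "sum_list (map f ys) \<le> sum_list (map f xs)"
proof -
  define c where "c t = ((f (Suc t) - f t) - (f t - f (t - 1)))" for t
  define R where "R s = f lo + (f (Suc lo) - f lo) * real (s - lo)
     + (\<Sum>t\<in>{lo<..<hi}. c t * real (s - t))" for s
  have fR: "\<And>zs. \<forall>v\<in>set zs. lo \<le> v \<and> v \<le> hi \<Longrightarrow> map f zs = map R zs"
    using rep unfolding R_def c_def by auto
  have SR: "\<And>zs. \<forall>v\<in>set zs. lo \<le> v \<Longrightarrow> sum_list (map R zs) = real (length zs) * f lo
     + (f (Suc lo) - f lo) * (real (sum_list zs) - real (length zs) * real lo)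
     + (\<Sum>t\<in>{lo<..<hi}. c t * sum_list (map (\<lambda>v. real (v - t)) zs))"
  proof -
    fix zs :: "nat list" assume a: "\<forall>v\<in>set zs. lo \<le> v"
    have "sum_list (map R zs) = sum_list (map (\<lambda>v. f lo) zs) + sum_list (map (\<lambda>v. (f (Suc lo) - f lo) * real (v - lo)) zs)
       + sum_list (map (\<lambda>v. \<Sum>t\<in>{lo<..<hi}. c t * real (v - t)) zs)"
      unfolding R_def by (simp add: sum_list_addf)
    also have "\<dots> = real (length zs) * f lo
     + (f (Suc lo) - f lo) * (real (sum_list zs) - real (length zs) * real lo)
     + (\<Sum>t\<in>{lo<..<hi}. c t * sum_list (map (\<lambda>v. real (v - t)) zs))"
      unfolding sum_list_sum_swap sum_list_const_mult sum_list_sub_lo[OF a]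
      by (simp add: sum_list_triv)
    finally show "?thesis zs" .
  qed
  have cnn: "c t \<ge> 0" if "t \<in> {lo<..<hi}" for t
    using conv[of t] that unfolding c_def by auto
  have "(\<Sum>t\<in>{lo<..<hi}. c t * sum_list (map (\<lambda>v. real (v - t)) ys))
      \<le> (\<Sum>t\<in>{lo<..<hi}. c t * sum_list (map (\<lambda>v. real (v - t)) xs))"
    by (intro sum_mono mult_left_mono tail[OF sorted len pre] cnn) auto
  moreover have "sum_list (map f xs) = sum_list (map R xs)" "sum_list (map f ys) = sum_list (map R ys)"
    using fR rng by (metis UnCI)+
  moreover have "sum_list (map R xs) = real (length xs) * f lo
     + (f (Suc lo) - f lo) * (real (sum_list xs) - real (length xs) * real lo)
     + (\<Sum>t\<in>{lo<..<hi}. c t * sum_list (map (\<lambda>v. real (v - t)) xs))" using SR rng by simp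
  moreover have "sum_list (map R ys) = real (length ys) * f lo
     + (f (Suc lo) - f lo) * (real (sum_list ys) - real (length ys) * real lo)
     + (\<Sum>t\<in>{lo<..<hi}. c t * sum_list (map (\<lambda>v. real (v - t)) ys))" using SR rng by simp
  ultimately show ?thesis using len sumeq by simp
qed



lemma prod_exp:
  assumes "\<forall>v\<in>set xs. w v > (0::real)"
  shows "prod_list (map w xs) = exp (sum_list (map (\<lambda>v. ln (w v)) xs))"
  using assms by (induction xs) (auto simp: exp_add)

lemma sum_list_neg: "sum_list (map (\<lambda>v. - g v) xs) = - sum_list (map g (xs::nat list))" for g :: "nat \<Rightarrow> real"
  by (induction xs) auto

lemma prod_nonneg:
  assumes "\<forall>v\<in>set xs. w v \<ge> (0::real)"
  shows "prod_list (map w xs) \<ge> 0"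
  using assms by (induction xs) auto

lemma sum_ge_len: "\<forall>v\<in>set xs. 1 \<le> v \<Longrightarrow> length xs \<le> sum_list (xs::nat list)"
  by (induction xs) auto

lemma sum_ones: "\<forall>v\<in>set xs. v = 1 \<Longrightarrow> sum_list xs = length (xs::nat list)"
  by (induction xs) auto

lemma all_one: "\<forall>v\<in>set xs. 1 \<le> v \<Longrightarrow> sum_list xs = length (xs::nat list) \<Longrightarrow> \<forall>v\<in>set xs. v = 1"
proof (induction xs)
  case Nil then show ?case by simp
next
  case (Cons a xs)
  have "length xs \<le> sum_list xs" using Cons.prems sum_ge_len by simp
  then have "a = 1" "sum_list xs = length xs" using Cons.prems by auto
  then show ?case using Cons by auto
qed

lemma sorted_bounds:
  assumes "sorted_wrt (\<ge>) (xs::nat list)" "xs \<noteq> []"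
  shows "\<forall>v\<in>set xs. last xs \<le> v \<and> v \<le> hd xs"
  using assms
proof (induction xs)
  case Nil then show ?case by simp
next
  case (Cons a xs)
  show ?case
  proof (cases "xs = []")
    case True then show ?thesis by simp
  next
    case False
    then have "last xs \<in> set xs" by simp
    then show ?thesis using Cons False by auto
  qed
qed

lemma sum_take1: "xs \<noteq> [] \<Longrightarrow> sum_list (take 1 xs) = hd (xs::nat list)"
  by (cases xs) auto

lemma sum_last: "xs \<noteq> [] \<Longrightarrow> sum_list xs = sum_list (take (length xs - 1) xs) + last (xs::nat list)"
  by (metis add.commute append_butlast_last_id butlast_conv_take sum_list.Cons sum_list.Nil
        sum_list_append add_0_right)

lemma prec_pre:
  assumes "prec ns ns'" "length ns = length ns'" "J \<le> length ns'"
  shows "sum_list (take J ns') \<le> sum_list (take J ns)"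
  using assms unfolding prec_def by (cases "J = 0") auto

lemma logconv_pos:
  assumes lc: "log_convex_seq w" and nn: "\<And>s. 1 \<le> s \<Longrightarrow> w s \<ge> 0"
    and s: "2 \<le> s" "w s > 0" and t: "1 \<le> t"
  shows "w t > 0"
proof -
  have step: "w (u - 1) > 0 \<and> w (u + 1) > 0" if "2 \<le> u" "w u > 0" for u
  proof -
    have "0 < (w u)^2" using that by simp
    also have "\<dots> \<le> w (u - 1) * w (u + 1)" using lc that unfolding log_convex_seq_def by auto
    finally have p: "0 < w (u - 1) * w (u + 1)" .
    have "w (u - 1) \<ge> 0" "w (u+1) \<ge> 0" using nn that by auto
    then show ?thesis using p by (metis less_eq_real_def mult_eq_0_iff)
  qed
  have up: "w (s + d) > 0" for d
    by (induction d) (use s step in \<open>auto\<close>)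
  have down: "d < s \<Longrightarrow> w (s - d) > 0" for d
  proof (induction d)
    case 0 then show ?case using s by simp
  next
    case (Suc d)
    then have "w (s - d) > 0" by simp
    moreover have "2 \<le> s - d" using Suc by simp
    ultimately have "w (s - d - 1) > 0" using step by blast
    then show ?case by (metis Suc_eq_plus1 diff_diff_left)
  qed
  show "w t > 0"
  proof (cases "s \<le> t")
    case True then show ?thesis using up[of "t - s"] by simp
  next
    case False then show ?thesis using down[of "s - t"] t by simp
  qed
qed

lemma convex_case:
  fixes w :: "nat \<Rightarrow> real"
  assumes lc: "log_convex_seq w" and nn: "\<And>s. 1 \<le> s \<Longrightarrow> w s \<ge> 0"
    and ns: "ns \<in> comps n k" and ns': "ns' \<in> comps n k" and pr: "prec ns ns'"
  shows "prod_list (map w ns') \<le> prod_list (map w ns)"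
proof -
  have L: "length ns = k" "sorted_wrt (\<ge>) ns" "\<forall>x\<in>set ns. 0 < x" "sum_list ns = n"
    using ns unfolding comps_def by auto
  have L': "length ns' = k" "sorted_wrt (\<ge>) ns'" "\<forall>x\<in>set ns'. 0 < x" "sum_list ns' = n"
    using ns' unfolding comps_def by auto
  have nnx: "\<forall>v\<in>set ns. w v \<ge> 0" using nn L(3) by (simp add: Suc_le_eq)
  show ?thesis
  proof (cases "\<exists>v\<in>set ns'. w v = 0")
    case True
    then have "prod_list (map w ns') = 0" by (force simp: prod_list_zero_iff)
    then show ?thesis using prod_nonneg[OF nnx] by simp
  next
    case False
    have "\<exists>v\<in>set ns'. 2 \<le> v"
    proof (rule ccontr)
      assume "\<not> ?thesis"
      then have o': "\<forall>v\<in>set ns'. v = 1" using L'(3) by fastforce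
      then have "sum_list ns' = k" using L'(1)
        by (simp add: sum_ones)
      then have "\<forall>v\<in>set ns. v = 1" using all_one[of ns] L L' by (simp add: Suc_le_eq)
      then have "ns = ns'" using o' L(1) L'(1) by (intro nth_equalityI) (auto, metis nth_mem)
      then show False using pr unfolding prec_def by simp
    qed
    then obtain s where s: "s \<in> set ns'" "2 \<le> s" by blast
    have "w s > 0" using False s nn[of s] by force
    then have pos: "\<And>t. 1 \<le> t \<Longrightarrow> w t > 0" using logconv_pos[OF lc nn s(2)] by blast
    have px: "\<forall>v\<in>set ns. w v > 0" "\<forall>v\<in>set ns'. w v > 0" using pos L(3) L'(3) by (auto simp: Suc_le_eq)
    have "sum_list (map (\<lambda>v. ln (w v)) ns') \<le> sum_list (map (\<lambda>v. ln (w v)) ns)"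
    proof (rule karamata[where lo=1 and hi=n])
      show "length ns = length ns'" "sum_list ns = sum_list ns'" "sorted_wrt (\<ge>) ns'" using L L' by auto
      show "\<And>J. J \<le> length ns' \<Longrightarrow> sum_list (take J ns') \<le> sum_list (take J ns)"
        using prec_pre[OF pr] L L' by auto
      show "\<forall>v\<in>set ns \<union> set ns'. 1 \<le> v \<and> v \<le> n"
        using L L' member_le_sum_list by (fastforce simp: Suc_le_eq)
      fix t assume t: "1 < t" "t < n"
      have "(w t)^2 \<le> w (t - 1) * w (t + 1)" using lc t unfolding log_convex_seq_def by auto
      moreover have "w t > 0" "w (t - 1) > 0" "w (t+1) > 0" using pos t by auto
      ultimately have "ln ((w t)^2) \<le> ln (w (t - 1) * w (t + 1))" by simp
      then have "2 * ln (w t) \<le> ln (w (t - 1)) + ln (w (t + 1))"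
        using \<open>w t > 0\<close> \<open>w (t - 1) > 0\<close> \<open>w (t+1) > 0\<close> by (simp add: ln_mult power2_eq_square)
      then show "ln (w t) - ln (w (t - 1)) \<le> ln (w (Suc t)) - ln (w t)" by simp
    qed
    then show ?thesis using prod_exp[OF px(1)] prod_exp[OF px(2)] by simp
  qed
qed

lemma concave_case:
  fixes w :: "nat \<Rightarrow> real"
  assumes lc: "log_concave_seq w" and nn: "\<And>s. 1 \<le> s \<Longrightarrow> w s \<ge> 0"
    and ns: "ns \<in> comps n k" and ns': "ns' \<in> comps n k" and pr: "prec ns ns'" and k: "1 \<le> k"
  shows "prod_list (map w ns) \<le> prod_list (map w ns')"
proof -
  have L: "length ns = k" "sorted_wrt (\<ge>) ns" "\<forall>x\<in>set ns. 0 < x" "sum_list ns = n"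
    using ns unfolding comps_def by auto
  have L': "length ns' = k" "sorted_wrt (\<ge>) ns'" "\<forall>x\<in>set ns'. 0 < x" "sum_list ns' = n"
    using ns' unfolding comps_def by auto
  have ne: "ns \<noteq> []" "ns' \<noteq> []" using L(1) L'(1) k by auto
  have nnx: "\<forall>v\<in>set ns'. w v \<ge> 0" using nn L'(3) by (simp add: Suc_le_eq)
  show ?thesis
  proof (cases "\<exists>v\<in>set ns. w v = 0")
    case True
    then have "prod_list (map w ns) = 0" by (force simp: prod_list_zero_iff)
    then show ?thesis using prod_nonneg[OF nnx] by simp
  next
    case False
    define lo where "lo = last ns"
    define hi where "hi = hd ns"
    have bx: "\<forall>v\<in>set ns. lo \<le> v \<and> v \<le> hi" using sorted_bounds[OF L(2) ne(1)] lo_def hi_def by auto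
    have by': "\<forall>v\<in>set ns'. last ns' \<le> v \<and> v \<le> hd ns'" using sorted_bounds[OF L'(2) ne(2)] .
    have pre: "\<And>J. J \<le> length ns' \<Longrightarrow> sum_list (take J ns') \<le> sum_list (take J ns)"
      using prec_pre[OF pr] L L' by auto
    have "hd ns' \<le> hi" using pre[of 1] ne sum_take1 hi_def L'(1) k by fastforce
    moreover have "lo \<le> last ns'"
      using pre[of "length ns' - 1"] sum_last[OF ne(1)] sum_last[OF ne(2)] L L' lo_def by simp
    ultimately have byy: "\<forall>v\<in>set ns'. lo \<le> v \<and> v \<le> hi" using by' by fastforce
    have lo1: "1 \<le> lo" using L(3) ne lo_def by (simp add: Suc_le_eq)
    have plo: "w lo > 0" "w hi > 0" using False nn lo1 ne lo_def hi_def bx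
       by (metis last_in_set hd_in_set less_eq_real_def order_trans)+
    have pos: "w b > 0" if "lo \<le> b" "b \<le> hi" for b
    proof (cases "b = lo \<or> b = hi")
      case True then show ?thesis using plo by auto
    next
      case False
      then have lt: "lo < b" "b < hi" using that by auto
      have "\<not> (1 \<le> lo \<and> lo < b \<and> b < hi \<and> w lo > 0 \<and> w b = 0 \<and> w hi > 0)"
        using lc unfolding log_concave_seq_def by blast
      then have "w b \<noteq> 0" using plo lt lo1 by blast
      moreover have "w b \<ge> 0" using nn that lo1 by simp
      ultimately show ?thesis by simp
    qed
    have px: "\<forall>v\<in>set ns. w v > 0" "\<forall>v\<in>set ns'. w v > 0" using pos bx byy by auto
    have "sum_list (map (\<lambda>v. - ln (w v)) ns') \<le> sum_list (map (\<lambda>v. - ln (w v)) ns)"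
    proof (rule karamata[where lo=lo and hi=hi])
      show "length ns = length ns'" "sum_list ns = sum_list ns'" "sorted_wrt (\<ge>) ns'" using L L' by auto
      show "\<And>J. J \<le> length ns' \<Longrightarrow> sum_list (take J ns') \<le> sum_list (take J ns)" by (rule pre)
      show "\<forall>v\<in>set ns \<union> set ns'. lo \<le> v \<and> v \<le> hi" using bx byy by auto
      fix t assume t: "lo < t" "t < hi"
      have "(w t)^2 \<ge> w (t - 1) * w (t + 1)" using lc t lo1 unfolding log_concave_seq_def by auto
      moreover have "w t > 0" "w (t - 1) > 0" "w (t+1) > 0" using pos t by auto
      ultimately have "ln ((w t)^2) \<ge> ln (w (t - 1) * w (t + 1))" by simp
      then have "2 * ln (w t) \<ge> ln (w (t - 1)) + ln (w (t + 1))"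
        using \<open>w t > 0\<close> \<open>w (t - 1) > 0\<close> \<open>w (t+1) > 0\<close> by (simp add: ln_mult power2_eq_square)
      then show "- ln (w t) - - ln (w (t - 1)) \<le> - ln (w (Suc t)) - - ln (w t)" by simp
    qed
    then have "sum_list (map (\<lambda>v. ln (w v)) ns) \<le> sum_list (map (\<lambda>v. ln (w v)) ns')"
      by (simp add: sum_list_neg[of "\<lambda>v. ln (w v)"])
    then show ?thesis using prod_exp[OF px(1)] prod_exp[OF px(2)] by simp
  qed
qed



theorem theorem3p5:
  fixes \<nu> :: "'a measure"
    and V :: "nat \<Rightarrow> nat \<Rightarrow> 'a \<Rightarrow> real"
    and W :: "nat \<Rightarrow> 'a \<Rightarrow> real"
    and Q :: "nat \<Rightarrow> nat set set pmf"
    and n :: nat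
  assumes V_meas: "\<And>n k. 1 \<le> k \<Longrightarrow> k \<le> n \<Longrightarrow> V n k \<in> borel_measurable \<nu>"
    and V_nonneg: "\<And>n k \<theta>. 1 \<le> k \<Longrightarrow> k \<le> n \<Longrightarrow> \<theta> \<in> space \<nu> \<Longrightarrow> V n k \<theta> \<ge> 0"
    and W_meas: "\<And>s. 1 \<le> s \<Longrightarrow> W s \<in> borel_measurable \<nu>"
    and W_nonneg: "\<And>s \<theta>. 1 \<le> s \<Longrightarrow> \<theta> \<in> space \<nu> \<Longrightarrow> W s \<theta> \<ge> 0"
    and EPPF: "\<And>m. 1 \<le> m \<Longrightarrow> is_EPPF m (Q m) (gibbs_mix \<nu> V W m)"
    and n: "1 \<le> n"
  shows "((\<forall>\<theta>\<in>space \<nu>. log_convex_seq (\<lambda>s. W s \<theta>)) \<longrightarrow> balance_averse n (gibbs_mix \<nu> V W n))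
       \<and> ((\<forall>\<theta>\<in>space \<nu>. log_concave_seq (\<lambda>s. W s \<theta>)) \<longrightarrow> balance_seeking n (gibbs_mix \<nu> V W n))"
  proof (intro conjI impI)
  have comps_len: "length ns = k" if "ns \<in> comps n k" for ns k using that unfolding comps_def by auto
  assume A: "\<forall>\<theta>\<in>space \<nu>. log_convex_seq (\<lambda>s. W s \<theta>)"
  show "balance_averse n (gibbs_mix \<nu> V W n)"
    unfolding balance_averse_def gibbs_mix_def
  proof (intro allI impI ballI)
    fix k ns ns' assume k: "1 \<le> k \<and> k \<le> n" and ns: "ns \<in> comps n k" and ns': "ns' \<in> comps n k"
      and pr: "prec ns ns'"
    show "(\<integral>\<^sup>+ \<theta>. ennreal (V n (length ns') \<theta> * (\<Prod>s\<leftarrow>ns'. W s \<theta>)) \<partial>\<nu>)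
        \<le> (\<integral>\<^sup>+ \<theta>. ennreal (V n (length ns) \<theta> * (\<Prod>s\<leftarrow>ns. W s \<theta>)) \<partial>\<nu>)"
    proof (rule nn_integral_mono)
      fix \<theta> assume th: "\<theta> \<in> space \<nu>"
      have "(\<Prod>s\<leftarrow>ns'. W s \<theta>) \<le> (\<Prod>s\<leftarrow>ns. W s \<theta>)"
        using convex_case[of "\<lambda>s. W s \<theta>", OF _ _ ns ns' pr] A th W_nonneg by blast
      moreover have "V n k \<theta> \<ge> 0" using V_nonneg k th by blast
      ultimately show "ennreal (V n (length ns') \<theta> * (\<Prod>s\<leftarrow>ns'. W s \<theta>))
          \<le> ennreal (V n (length ns) \<theta> * (\<Prod>s\<leftarrow>ns. W s \<theta>))"
        using comps_len[OF ns] comps_len[OF ns'] by (auto intro!: ennreal_leI mult_left_mono)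
    qed
  qed
next
  have comps_len: "length ns = k" if "ns \<in> comps n k" for ns k using that unfolding comps_def by auto
  assume A: "\<forall>\<theta>\<in>space \<nu>. log_concave_seq (\<lambda>s. W s \<theta>)"
  show "balance_seeking n (gibbs_mix \<nu> V W n)"
    unfolding balance_seeking_def gibbs_mix_def
  proof (intro allI impI ballI)
    fix k ns ns' assume k: "1 \<le> k \<and> k \<le> n" and ns: "ns \<in> comps n k" and ns': "ns' \<in> comps n k"
      and pr: "prec ns ns'"
    show "(\<integral>\<^sup>+ \<theta>. ennreal (V n (length ns) \<theta> * (\<Prod>s\<leftarrow>ns. W s \<theta>)) \<partial>\<nu>)
        \<le> (\<integral>\<^sup>+ \<theta>. ennreal (V n (length ns') \<theta> * (\<Prod>s\<leftarrow>ns'. W s \<theta>)) \<partial>\<nu>)"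
    proof (rule nn_integral_mono)
      fix \<theta> assume th: "\<theta> \<in> space \<nu>"
      have "(\<Prod>s\<leftarrow>ns. W s \<theta>) \<le> (\<Prod>s\<leftarrow>ns'. W s \<theta>)"
        using concave_case[of "\<lambda>s. W s \<theta>", OF _ _ ns ns' pr] A th W_nonneg k by blast
      moreover have "V n k \<theta> \<ge> 0" using V_nonneg k th by blast
      ultimately show "ennreal (V n (length ns) \<theta> * (\<Prod>s\<leftarrow>ns. W s \<theta>))
          \<le> ennreal (V n (length ns') \<theta> * (\<Prod>s\<leftarrow>ns'. W s \<theta>))"
        using comps_len[OF ns] comps_len[OF ns'] by (auto intro!: ennreal_leI mult_left_mono)
    qed
  qed
qed

end
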